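(* If $X$ is an (infinite) $T_1$-space such that $nu_s(X)\le 2^{s(X)}$, then $|X|\le 2^{2^{s(X)}}$.
   Context: For a space $X$ and $A\subseteq X$, the $\theta$-closure of $A$ is $\mathrm{cl}_\theta(A):=\{y\in X:\ \overline{B}\cap A\neq\emptyset$ for every open neighborhood $B$ of $y\}$. The non-Urysohn number of $X$ with respect to singletons is $nu_s(X):=1+\sup\{|\mathrm{cl}_\theta(\{x\})|:x\in X\}$. $s(X)$ denotes the spread of $X$ (supremum of cardinalities of discrete subspaces, plus $\omega$). Throughout, "space" means infinite topological space. *)

theory Defs
  imports "HOL-Analysis.Analysis"
begin

definition theta_closure_of :: "'a topology \<Rightarrow> 'a set \<Rightarrow> 'a set" where
  "theta_closure_of X A =
     {y \<in> topspace X. \<forall>B. openin X B \<and> y \<in> B \<longrightarrow> (X closure_of B) \<inter> A \<noteq> {}}"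

definition discrete_subspace :: "'a topology \<Rightarrow> 'a set \<Rightarrow> bool" where
  "discrete_subspace X D \<longleftrightarrow> D \<subseteq> topspace X \<and> subtopology X D = discrete_topology D"

definition spread_bound :: "'a topology \<Rightarrow> 'b rel \<Rightarrow> bool" where
  "spread_bound X r \<longleftrightarrow> Card_order r \<and> (natLeq, r) \<in> ordLeq \<and>
     (\<forall>D. discrete_subspace X D \<longrightarrow> (card_of D, r) \<in> ordLeq)"

text \<open>r represents the cardinal s(X) = sup of sizes of discrete subspaces, plus omega:
  the least cardinal bound (least among cardinal orders on the same carrier type, which
  suffices since any smaller cardinal embeds into Field r).\<close>
definition is_spread :: "'a topology \<Rightarrow> 'b rel \<Rightarrow> bool" where
  "is_spread X r \<longleftrightarrow> spread_bound X r \<and>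
     (\<forall>r'::'b rel. spread_bound X r' \<longrightarrow> (r, r') \<in> ordLeq)"

text \<open>nu_s(X) = 1 + sup{|cl_theta({x})|} is at most the cardinal c.
  For every cardinal c this is equivalent to: 1 + |cl_theta({x})| \<le> c for all x
  (if the sup is finite it is attained; if infinite, 1 + sup = sup and c is infinite).\<close>
definition nus_le :: "'a topology \<Rightarrow> 'b rel \<Rightarrow> bool" where
  "nus_le X c \<longleftrightarrow>
     (\<forall>x \<in> topspace X. (BNF_Cardinal_Arithmetic.csum BNF_Cardinal_Arithmetic.cone (card_of (theta_closure_of X {x})), c) \<in> ordLeq)"

end

theory Submission
  imports Defs
begin

unbundle cardinal_syntax


lemma discrete_sub_intro:
  assumes "D \<subseteq> topspace X" and "\<And>d. d \<in> D \<Longrightarrow> \<exists>W. openin X W \<and> W \<inter> D = {d}"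
  shows "subtopology X D = discrete_topology D"
proof -
  have "topspace (subtopology X D) = D" using assms(1) by auto
  moreover have "\<forall>x\<in>D. openin (subtopology X D) {x}"
  proof
    fix x assume "x \<in> D"
    then obtain W where "openin X W" "W \<inter> D = {x}" using assms(2) by blast
    then show "openin (subtopology X D) {x}" unfolding openin_subtopology by blast
  qed
  ultimately show ?thesis by (metis discrete_topology_unique)
qed

lemma sapirovskii:
  fixes X :: "'a topology"
  assumes Y: "Y \<subseteq> topspace X" and U: "\<And>y. y \<in> Y \<Longrightarrow> openin X (U y) \<and> y \<in> U y"
  shows "\<exists>D \<subseteq> Y. subtopology X D = discrete_topology D \<and> Y \<subseteq> X closure_of D \<union> (\<Union>d\<in>D. U d)"
proof -
  have "\<exists>r::'a rel. Well_order r \<and> Field r = UNIV" by (rule well_ordering)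
  then obtain r :: "'a rel" where r0: "Well_order r \<and> Field r = UNIV" ..
  have r: "Well_order r" "Field r = UNIV" using r0 by (rule conjunct1) (rule conjunct2[OF r0])
  define R where "R = r - Id"
  have wfR: "wf R" using r(1) unfolding R_def well_order_on_def by blast
  have tot: "\<And>a b. a \<noteq> b \<Longrightarrow> (a,b) \<in> R \<or> (b,a) \<in> R"
    using r unfolding R_def well_order_on_def linear_order_on_def total_on_def by auto
  define F where "F = (\<lambda>(f::'a\<Rightarrow>bool) y. y \<in> Y \<and> y \<notin> X closure_of {z. (z,y) \<in> R \<and> f z}
        \<and> (\<forall>z. (z,y) \<in> R \<and> f z \<longrightarrow> y \<notin> U z))"
  define chi where "chi = wfrec R F"
  define D where "D = {y. chi y}"
  have chi: "chi y \<longleftrightarrow> y \<in> Y \<and> y \<notin> X closure_of {z\<in>D. (z,y) \<in> R}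
        \<and> (\<forall>z\<in>D. (z,y) \<in> R \<longrightarrow> y \<notin> U z)" for y
  proof -
    have "chi y = F (cut chi R y) y" unfolding chi_def by (rule wfrec[OF wfR])
    also have "{z. (z,y) \<in> R \<and> cut chi R y z} = {z\<in>D. (z,y) \<in> R}"
      by (auto simp: cut_apply D_def)
    then have "F (cut chi R y) y \<longleftrightarrow> y \<in> Y \<and> y \<notin> X closure_of {z\<in>D. (z,y) \<in> R}
        \<and> (\<forall>z\<in>D. (z,y) \<in> R \<longrightarrow> y \<notin> U z)"
      unfolding F_def by (auto simp: cut_apply D_def)
    finally show ?thesis .
  qed
  have DY: "D \<subseteq> Y" using chi D_def by blast
  have cover: "Y \<subseteq> X closure_of D \<union> (\<Union>d\<in>D. U d)"
  proof
    fix y assume y: "y \<in> Y"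
    show "y \<in> X closure_of D \<union> (\<Union>d\<in>D. U d)"
    proof (cases "y \<in> D")
      case True
      then show ?thesis using closure_of_subset[of D X] DY Y U by blast
    next
      case False
      then have "\<not> chi y" by (simp add: D_def)
      then have "y \<in> X closure_of {z\<in>D. (z,y) \<in> R} \<or> (\<exists>z\<in>D. y \<in> U z)"
        using chi y by blast
      moreover have "X closure_of {z\<in>D. (z,y) \<in> R} \<subseteq> X closure_of D"
        by (rule closure_of_mono) blast
      ultimately show ?thesis by blast
    qed
  qed
  have "subtopology X D = discrete_topology D"
  proof (rule discrete_sub_intro)
    show "D \<subseteq> topspace X" using DY Y by blast
    fix d assume d: "d \<in> D"
    define W where "W = U d \<inter> (topspace X - X closure_of {z\<in>D. (z,d) \<in> R})"
    have "openin X W" unfolding W_def using U d DY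
      by (intro openin_Int openin_diff) auto
    moreover have "W \<inter> D = {d}"
    proof
      show "{d} \<subseteq> W \<inter> D" using d DY Y U chi[of d] unfolding W_def D_def by auto
      show "W \<inter> D \<subseteq> {d}"
      proof
        fix e assume e: "e \<in> W \<inter> D"
        show "e \<in> {d}"
        proof (rule ccontr)
          assume "e \<notin> {d}"
          then have "(e,d) \<in> R \<or> (d,e) \<in> R" using tot by auto
          then show False
          proof
            assume "(e,d) \<in> R"
            then have "e \<in> X closure_of {z\<in>D. (z,d) \<in> R}"
              using closure_of_subset[of "{z\<in>D. (z,d) \<in> R}" X] e DY Y by blast
            then show False using e unfolding W_def by blast
          next
            assume "(d,e) \<in> R"
            then have "e \<notin> U d" using chi[of e] e d D_def by blast
            then show False using e unfolding W_def by blast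
          qed
        qed
      qed
    qed
    ultimately show "\<exists>W. openin X W \<and> W \<inter> D = {d}" by blast
  qed
  then show ?thesis using DY cover by blast
qed




lemma pow_mono_ord: "|A| \<le>o |B| \<Longrightarrow> |Pow A| \<le>o |Pow B|"
proof -
  assume "|A| \<le>o |B|"
  then obtain f where f: "inj_on f A" "f ` A \<subseteq> B" unfolding card_of_ordLeq[of A B, symmetric] by blast
  have "inj_on (image f) (Pow A)" by (rule inj_on_image_Pow[OF f(1)])
  moreover have "image f ` Pow A \<subseteq> Pow B" using f(2) by auto
  ultimately show ?thesis unfolding card_of_ordLeq[of "Pow A" "Pow B", symmetric] by blast
qed

lemma func_bound:
  assumes K: "infinite K" and S: "|S| \<le>o |Pow (Pow K)|"
  shows "|Func K S| \<le>o |Pow (Pow K)|"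
proof -
  obtain h where h: "inj_on h S" "h ` S \<subseteq> Pow (Pow K)" using S unfolding card_of_ordLeq[of S "Pow (Pow K)", symmetric] by blast
  define P where "P = (\<lambda>f. {(k,q). k \<in> K \<and> q \<in> h (f k)})"
  have "inj_on P (Func K S)"
  proof (rule inj_onI)
    fix f g assume f: "f \<in> Func K S" and g: "g \<in> Func K S" and eq: "P f = P g"
    show "f = g"
    proof
      fix k show "f k = g k"
      proof (cases "k \<in> K")
        case True
        have "h (f k) = h (g k)"
        proof -
          have "\<And>q. q \<in> h (f k) \<longleftrightarrow> q \<in> h (g k)"
          proof -
            fix q
            have "(k,q) \<in> P f \<longleftrightarrow> (k,q) \<in> P g" using eq by simp
            then show "q \<in> h (f k) \<longleftrightarrow> q \<in> h (g k)" using True by (simp add: P_def)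
          qed
          then show ?thesis by blast
        qed
        moreover have "f k \<in> S" "g k \<in> S" using f g True unfolding Func_def by auto
        ultimately show ?thesis using h(1) by (meson inj_onD)
      next
        case False
        then show ?thesis using f g unfolding Func_def by auto
      qed
    qed
  qed
  moreover have "P ` Func K S \<subseteq> Pow (K \<times> Pow K)"
    using h(2) unfolding P_def Func_def by blast
  ultimately have 1: "|Func K S| \<le>o |Pow (K \<times> Pow K)|" unfolding card_of_ordLeq[of "Func K S" "Pow (K \<times> Pow K)", symmetric] by blast
  have "|K \<times> Pow K| =o |Pow K|"
  proof -
    have "infinite (Pow K)" using K by simp
    moreover have "K \<noteq> {}" using K by auto
    moreover have "|K| \<le>o |Pow K|" by (rule ordLess_imp_ordLeq[OF card_of_Pow])
    ultimately show ?thesis using card_of_Times_infinite[of "Pow K" K] by blast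
  qed
  then have "|K \<times> Pow K| \<le>o |Pow K|" by (rule ordIso_imp_ordLeq)
  then have "|Pow (K \<times> Pow K)| \<le>o |Pow (Pow K)|" by (rule pow_mono_ord)
  then show ?thesis by (rule ordLeq_transitive[OF 1])
qed

lemma small_subsets_bound:
  fixes S :: "'a set" and K :: "'b set"
  assumes K: "infinite K" and S: "|S| \<le>o |Pow (Pow K)|"
  shows "|{E. E \<subseteq> S \<and> |E| \<le>o |K|}| \<le>o |Pow (Pow K)|"
proof -
  have sub: "{E. E \<subseteq> S \<and> |E| \<le>o |K|} \<subseteq> {{}} \<union> (\<lambda>f. f ` K) ` Func K S"
  proof
    fix E assume E: "E \<in> {E. E \<subseteq> S \<and> |E| \<le>o |K|}"
    show "E \<in> {{}} \<union> (\<lambda>f. f ` K) ` Func K S"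
    proof (cases "E = {}")
      case False
      then obtain g where g: "g ` K = E" using E card_of_ordLeq2[of E K] by blast
      define f where "f = (\<lambda>k. if k \<in> K then g k else undefined)"
      have "f \<in> Func K S" using g E unfolding f_def Func_def by auto
      moreover have "f ` K = E" using g unfolding f_def by auto
      ultimately show ?thesis by blast
    qed simp
  qed
  have c: "Cinfinite |Pow (Pow K)|" using K by (simp add: cinfinite_def card_of_Card_order card_of_card_order_on Field_card_of)
  have e1: "|{{}} :: 'a set set| \<le>o |Pow (Pow K)|"
    by (rule card_of_singl_ordLeq) blast
  have e2: "|(\<lambda>f. f ` K) ` Func K S| \<le>o |Pow (Pow K)|"
    by (rule ordLeq_transitive[OF card_of_image func_bound[OF K S]])
  have "|{{}} \<union> (\<lambda>f. f ` K) ` Func K S| \<le>o |Pow (Pow K)|"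
    by (rule card_of_Un_ordLeq_infinite_Field[OF _ e1 e2 card_of_Card_order]) (use K in \<open>simp add: Field_card_of\<close>)
  then show ?thesis by (rule ordLeq_transitive[OF card_of_mono1[OF sub]])
qed




lemma closing_off:
  fixes K :: "'b set" and T :: "'a set" and G :: "'a set \<Rightarrow> 'a set"
  assumes K: "infinite K"
    and G: "\<And>E. E \<subseteq> T \<Longrightarrow> |E| \<le>o |K| \<Longrightarrow> G E \<subseteq> T \<and> |G E| \<le>o |Pow (Pow K)|"
  shows "\<exists>A \<subseteq> T. |A| \<le>o |Pow (Pow K)| \<and> (\<forall>E. E \<subseteq> A \<and> |E| \<le>o |K| \<longrightarrow> G E \<subseteq> A)"
proof -
  define R0 where "R0 = cardSuc |K|"
  have cK: "Card_order |K|" by (rule card_of_Card_order)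
  have CiK: "Cinfinite |K|" using K cK by (simp add: cinfinite_def Field_card_of)
  have R0c: "Card_order R0" unfolding R0_def using cK by (rule cardSuc_Card_order)
  have R0w: "Well_order R0" using R0c unfolding card_order_on_def by blast
  define Rs where "Rs = R0 - Id"
  have wfRs: "wf Rs" using R0w unfolding Rs_def well_order_on_def by blast
  have transR0: "trans R0" and antiR0: "antisym R0"
    using R0w unfolding well_order_on_def linear_order_on_def partial_order_on_def preorder_on_def by auto
  have transRs: "(k,j) \<in> Rs \<Longrightarrow> (j,i) \<in> Rs \<Longrightarrow> (k,i) \<in> Rs" for k j i
    using transR0 antiR0 unfolding Rs_def trans_def antisym_def by blast
  define H where "H = (\<lambda>S. \<Union>{G E | E. E \<subseteq> S \<and> E \<subseteq> T \<and> |E| \<le>o |K|})"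
  have Hmono: "S \<subseteq> S' \<Longrightarrow> H S \<subseteq> H S'" for S S' unfolding H_def by (rule Union_mono) auto
  have HT: "H S \<subseteq> T" for S unfolding H_def
  proof (rule Union_least)
    fix Z assume "Z \<in> {G E | E. E \<subseteq> S \<and> E \<subseteq> T \<and> |E| \<le>o |K|}"
    then obtain E where E: "Z = G E" "E \<subseteq> T" "|E| \<le>o |K|" by blast
    show "Z \<subseteq> T" using G[OF E(2) E(3)] E(1) by simp
  qed
  define F where "F = (\<lambda>(f::'b set \<Rightarrow> 'a set) i. H (\<Union>(f ` {j. (j,i) \<in> Rs})))"
  define As where "As = wfrec Rs F"
  have As: "As i = H (\<Union>(As ` {j. (j,i) \<in> Rs}))" for i
  proof -
    have "As i = F (cut As Rs i) i" unfolding As_def by (rule wfrec[OF wfRs])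
    moreover have "(cut As Rs i) ` {j. (j,i) \<in> Rs} = As ` {j. (j,i) \<in> Rs}"
      by (auto simp: cut_apply)
    ultimately show ?thesis unfolding F_def by simp
  qed
  have AsT: "As i \<subseteq> T" for i using HT As by metis
  have chain: "relChain R0 As"
    unfolding relChain_def
  proof (intro allI impI)
    fix j i assume ji: "(j,i) \<in> R0"
    show "As j \<le> As i"
    proof (cases "j = i")
      case False
      then have "(j,i) \<in> Rs" using ji Rs_def by auto
      then have "\<Union>(As ` {k. (k,j) \<in> Rs}) \<subseteq> \<Union>(As ` {k. (k,i) \<in> Rs})"
        using transRs by blast
      then show ?thesis using Hmono As by metis
    qed simp
  qed
  have muinf: "infinite (Pow (Pow K))" using K by simp
  have KPK: "|K| \<le>o |Pow K|" by (rule ordLess_imp_ordLeq[OF card_of_Pow])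
  have PKmu: "|Pow K| \<le>o |Pow (Pow K)|" by (rule ordLess_imp_ordLeq[OF card_of_Pow])
  have Kmu: "|K| \<le>o |Pow (Pow K)|" by (rule ordLeq_transitive[OF KPK PKmu])
  have under: "|{j. (j,i) \<in> Rs}| \<le>o |K|" for i
  proof (cases "i \<in> Field R0")
    case True
    have "{j. (j,i) \<in> Rs} = underS R0 i" unfolding Rs_def underS_def by auto
    moreover have "|underS R0 i| <o R0" using card_of_underS[OF R0c True] .
    ultimately have "|{j. (j,i) \<in> Rs}| <o cardSuc |K|" unfolding R0_def by simp
    then show ?thesis using cardSuc_ordLeq_ordLess[OF cK card_of_Card_order] by blast
  next
    case False
    then have "{j. (j,i) \<in> Rs} = {}" unfolding Rs_def Field_def by auto
    then show ?thesis by (simp add: card_of_empty)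
  qed
  have size: "|As i| \<le>o |Pow (Pow K)|" for i
  proof (induction i rule: wf_induct[OF wfRs])
    case (1 i)
    define S where "S = \<Union>(As ` {j. (j,i) \<in> Rs})"
    have S: "|S| \<le>o |Pow (Pow K)|" unfolding S_def
      by (rule card_of_UNION_ordLeq_infinite[OF muinf ordLeq_transitive[OF under[of i] Kmu]])
        (use 1 in blast)
    have "{E. E \<subseteq> S \<and> E \<subseteq> T \<and> |E| \<le>o |K|} \<subseteq> {E. E \<subseteq> S \<and> |E| \<le>o |K|}" by blast
    then have I: "|{E. E \<subseteq> S \<and> E \<subseteq> T \<and> |E| \<le>o |K|}| \<le>o |Pow (Pow K)|"
      by (rule ordLeq_transitive[OF card_of_mono1 small_subsets_bound[OF K S]])
    have eq: "As i = (\<Union>E\<in>{E. E \<subseteq> S \<and> E \<subseteq> T \<and> |E| \<le>o |K|}. G E)"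
    proof -
      have "As i = H S" unfolding S_def by (rule As)
      then show ?thesis unfolding H_def by blast
    qed
    show ?case unfolding eq
      by (rule card_of_UNION_ordLeq_infinite[OF muinf I]) (use G in blast)
  qed
  define A where "A = (\<Union>i\<in>Field R0. As i)"
  have "|Field R0| \<le>o |Pow (Pow K)|"
  proof -
    have "|K| <o |Pow K|" by (rule card_of_Pow)
    then have "R0 \<le>o |Pow K|" unfolding R0_def by (rule cardSuc_least[OF cK card_of_Card_order])
    then have "|Field R0| \<le>o |Pow K|" by (rule ordIso_ordLeq_trans[OF card_of_Field_ordIso[OF R0c]])
    then show ?thesis by (rule ordLeq_transitive[OF _ PKmu])
  qed
  then have Asize: "|A| \<le>o |Pow (Pow K)|" unfolding A_def
    by (rule card_of_UNION_ordLeq_infinite[OF muinf]) (use size in blast)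
  have AT: "A \<subseteq> T" unfolding A_def using AsT by blast
  have clo: "G E \<subseteq> A" if E: "E \<subseteq> A" "|E| \<le>o |K|" for E
  proof -
    have "relChain (cardSuc |K| ) As" using chain R0_def by simp
    then obtain i where i: "i \<in> Field R0" "E \<subseteq> As i"
      using cardSuc_UNION_Cinfinite[OF CiK] E unfolding A_def R0_def by blast
    have "Cinfinite R0" unfolding R0_def using CiK by (rule Cinfinite_cardSuc)
    then have "\<not> finite (Field R0)" by (simp add: cinfinite_def)
    then obtain b where b: "b \<in> Field R0" "i \<noteq> b" "(i,b) \<in> R0"
      using infinite_Card_order_limit[OF R0c _ i(1)] by blast
    then have "(i,b) \<in> Rs" unfolding Rs_def by auto
    then have "E \<subseteq> \<Union>(As ` {j. (j,b) \<in> Rs})" using i by blast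
    moreover have "E \<subseteq> T" using E AT by blast
    ultimately have "G E \<subseteq> H (\<Union>(As ` {j. (j,b) \<in> Rs}))" using E unfolding H_def by blast
    then have "G E \<subseteq> As b" using As by metis
    then show ?thesis using b unfolding A_def by blast
  qed
  show ?thesis using AT Asize clo by blast
qed




lemma N_sub: "theta_closure_of X A \<subseteq> topspace X"
  unfolding theta_closure_of_def by blast

lemma sep:
  assumes "x \<in> topspace X" "y \<in> topspace X" "y \<notin> theta_closure_of X {x}"
  shows "\<exists>U V. openin X U \<and> openin X V \<and> y \<in> U \<and> x \<in> V \<and> U \<inter> V = {}"
proof -
  obtain B where B: "openin X B" "y \<in> B" "X closure_of B \<inter> {x} = {}"
    using assms unfolding theta_closure_of_def by blast
  then have "x \<notin> X closure_of B" by blast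
  then obtain V where "x \<in> V" "openin X V" "\<forall>z. z \<in> B \<longrightarrow> z \<notin> V"
    using assms(1) unfolding in_closure_of by blast
  then show ?thesis using B by blast
qed

lemma not_in_cl_disj:
  assumes "openin X V" "x \<in> V" "V \<inter> F = {}"
  shows "x \<notin> X closure_of F"
  using assms unfolding in_closure_of by blast

lemma clbound:
  fixes K :: "'b set"
  assumes K: "infinite K" and ET: "E \<subseteq> topspace X" and EK: "|E| \<le>o |K|"
    and N: "\<And>x. x \<in> topspace X \<Longrightarrow> |theta_closure_of X {x}| \<le>o |Pow K|"
  shows "|X closure_of E| \<le>o |Pow (Pow K)|"
proof -
  define C where "C = X closure_of E"
  define tr where "tr = (\<lambda>z. {F. F \<subseteq> E \<and> z \<in> X closure_of F})"
  have muinf: "infinite (Pow (Pow K))" using K by simp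
  have PKmu: "|Pow K| \<le>o |Pow (Pow K)|" by (rule ordLess_imp_ordLeq[OF card_of_Pow])
  have eq: "C = (\<Union>P\<in>tr ` C. {z\<in>C. tr z = P})" by blast
  have "tr ` C \<subseteq> Pow (Pow E)" unfolding tr_def by blast
  then have "|tr ` C| \<le>o |Pow (Pow E)|" by (rule card_of_mono1)
  moreover have "|Pow (Pow E)| \<le>o |Pow (Pow K)|" by (intro pow_mono_ord EK)
  ultimately have I: "|tr ` C| \<le>o |Pow (Pow K)|" by (rule ordLeq_transitive)
  have fib: "|{z\<in>C. tr z = P}| \<le>o |Pow (Pow K)|" if P: "P \<in> tr ` C" for P
  proof -
    obtain z0 where z0: "z0 \<in> C" "tr z0 = P" using P by blast
    have z0T: "z0 \<in> topspace X" using z0 closure_of_subset_topspace[of X E] C_def by blast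
    have "{z\<in>C. tr z = P} \<subseteq> theta_closure_of X {z0}"
    proof
      fix z assume z: "z \<in> {z\<in>C. tr z = P}"
      then have zT: "z \<in> topspace X" using closure_of_subset_topspace[of X E] C_def by blast
      show "z \<in> theta_closure_of X {z0}"
      proof (rule ccontr)
        assume "z \<notin> theta_closure_of X {z0}"
        then obtain U V where UV: "openin X U" "openin X V" "z \<in> U" "z0 \<in> V" "U \<inter> V = {}"
          using sep[OF z0T zT] by blast
        have "z \<in> X closure_of (U \<inter> E)"
          using openin_Int_closure_of_subset[OF UV(1), of E] z UV(3) C_def by blast
        then have "U \<inter> E \<in> tr z" unfolding tr_def by blast
        then have "z0 \<in> X closure_of (U \<inter> E)" using z z0 unfolding tr_def by auto
        moreover have "z0 \<notin> X closure_of (U \<inter> E)"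
          by (rule not_in_cl_disj[OF UV(2) UV(4)]) (use UV(5) in blast)
        ultimately show False by blast
      qed
    qed
    then have "|{z\<in>C. tr z = P}| \<le>o |theta_closure_of X {z0}|" by (rule card_of_mono1)
    also have "|theta_closure_of X {z0}| \<le>o |Pow K|" by (rule N[OF z0T])
    finally show ?thesis using PKmu ordLeq_transitive by blast
  qed
  have "|\<Union>P\<in>tr ` C. {z\<in>C. tr z = P}| \<le>o |Pow (Pow K)|"
    by (rule card_of_UNION_ordLeq_infinite[OF muinf I]) (use fib in blast)
  then show ?thesis using eq C_def by simp
qed

lemma Wfam:
  fixes K :: "'b set" and X :: "'a topology"
  assumes K: "infinite K" and x: "x \<in> topspace X"
    and spread: "\<And>D. D \<subseteq> topspace X \<Longrightarrow> subtopology X D = discrete_topology D \<Longrightarrow> |D| \<le>o |K|"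
  shows "\<exists>\<W>. (\<forall>W\<in>\<W>. openin X W \<and> x \<in> W) \<and> |\<W>| \<le>o |Pow K|
     \<and> (\<forall>p\<in>topspace X. p \<notin> theta_closure_of X {x} \<longrightarrow> (\<exists>W\<in>\<W>. p \<notin> W))"
proof -
  define T where "T = topspace X"
  define Y where "Y = T - theta_closure_of X {x}"
  have "\<forall>y\<in>Y. \<exists>V. openin X V \<and> y \<in> V \<and> x \<notin> X closure_of V"
  proof
    fix y assume y: "y \<in> Y"
    then obtain U V where UV: "openin X U" "openin X V" "y \<in> U" "x \<in> V" "U \<inter> V = {}"
      using sep[OF x, of y] unfolding Y_def T_def by blast
    have "x \<notin> X closure_of U" by (rule not_in_cl_disj[OF UV(2) UV(4)]) (use UV(5) in blast)
    then show "\<exists>V. openin X V \<and> y \<in> V \<and> x \<notin> X closure_of V" using UV by blast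
  qed
  then obtain V where V: "\<And>y. y \<in> Y \<Longrightarrow> openin X (V y) \<and> y \<in> V y \<and> x \<notin> X closure_of (V y)"
    by metis
  have YT: "Y \<subseteq> topspace X" unfolding Y_def T_def by blast
  obtain D where D: "D \<subseteq> Y" "subtopology X D = discrete_topology D"
      "Y \<subseteq> X closure_of D \<union> (\<Union>d\<in>D. V d)"
    using sapirovskii[OF YT, of V] V by blast
  have DK: "|D| \<le>o |K|" using spread[OF _ D(2)] D(1) YT by blast
  define \<W> where "\<W> = (\<lambda>d. T - X closure_of (V d)) ` D \<union> (\<lambda>F. T - X closure_of F) ` {F. F \<subseteq> D \<and> x \<notin> X closure_of F}"
  have op: "\<forall>W\<in>\<W>. openin X W \<and> x \<in> W"
  proof
    fix W assume "W \<in> \<W>"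
    then obtain F where "W = T - X closure_of F" "x \<notin> X closure_of F"
      unfolding \<W>_def using V D(1) by blast
    then show "openin X W \<and> x \<in> W" using x unfolding T_def by auto
  qed
  have KPK: "|K| \<le>o |Pow K|" by (rule ordLess_imp_ordLeq[OF card_of_Pow])
  have c1: "|(\<lambda>d. T - X closure_of (V d)) ` D| \<le>o |Pow K|"
    by (rule ordLeq_transitive[OF card_of_image ordLeq_transitive[OF DK KPK]])
  have "{F. F \<subseteq> D \<and> x \<notin> X closure_of F} \<subseteq> Pow D" by blast
  then have "|{F. F \<subseteq> D \<and> x \<notin> X closure_of F}| \<le>o |Pow K|"
    by (rule ordLeq_transitive[OF card_of_mono1 pow_mono_ord[OF DK]])
  then have c2: "|(\<lambda>F. T - X closure_of F) ` {F. F \<subseteq> D \<and> x \<notin> X closure_of F}| \<le>o |Pow K|"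
    by (rule ordLeq_transitive[OF card_of_image])
  have sz: "|\<W>| \<le>o |Pow K|" unfolding \<W>_def
    by (rule card_of_Un_ordLeq_infinite_Field[OF _ c1 c2 card_of_Card_order]) (use K in \<open>simp add: Field_card_of\<close>)
  have cov: "\<forall>p\<in>topspace X. p \<notin> theta_closure_of X {x} \<longrightarrow> (\<exists>W\<in>\<W>. p \<notin> W)"
  proof (intro ballI impI)
    fix p assume p: "p \<in> topspace X" "p \<notin> theta_closure_of X {x}"
    then have pY: "p \<in> Y" unfolding Y_def T_def by blast
    then have "p \<in> X closure_of D \<or> (\<exists>d\<in>D. p \<in> V d)" using D(3) by blast
    then show "\<exists>W\<in>\<W>. p \<notin> W"
    proof
      assume "\<exists>d\<in>D. p \<in> V d"
      then obtain d where d: "d \<in> D" "p \<in> V d" by blast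
      have "V d \<subseteq> topspace X" using V[of d] d D(1) openin_subset by blast
      then have "p \<in> X closure_of (V d)" using closure_of_subset d(2) by blast
      moreover have "T - X closure_of (V d) \<in> \<W>" unfolding \<W>_def using d(1) by blast
      ultimately show ?thesis by blast
    next
      assume pc: "p \<in> X closure_of D"
      obtain U V' where UV: "openin X U" "openin X V'" "p \<in> U" "x \<in> V'" "U \<inter> V' = {}"
        using sep[OF x p(1) p(2)] by blast
      have "p \<in> X closure_of (U \<inter> D)"
        using openin_Int_closure_of_subset[OF UV(1), of D] pc UV(3) by blast
      moreover have "x \<notin> X closure_of (U \<inter> D)"
        by (rule not_in_cl_disj[OF UV(2) UV(4)]) (use UV(5) in blast)
      then have "T - X closure_of (U \<inter> D) \<in> \<W>" unfolding \<W>_def by blast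
      ultimately show ?thesis by blast
    qed
  qed
  show ?thesis using op sz cov by blast
qed

theorem corollary3p13:
  fixes X :: "'a topology" and s :: "'b rel"
  assumes "infinite (topspace X)"
    and "t1_space X"
    and "is_spread X s"
    and "nus_le X (BNF_Cardinal_Arithmetic.cexp BNF_Cardinal_Arithmetic.ctwo s)"
  shows "(card_of (topspace X), BNF_Cardinal_Arithmetic.cexp BNF_Cardinal_Arithmetic.ctwo (BNF_Cardinal_Arithmetic.cexp BNF_Cardinal_Arithmetic.ctwo s)) \<in> ordLeq"
proof -
  define T where "T = topspace X"
  define K where "K = Field s"
  define N where "N = (\<lambda>x. theta_closure_of X {x})"
  have sb: "spread_bound X s" using assms(3) unfolding is_spread_def by blast
  have sc: "Card_order s" "natLeq \<le>o s" "\<forall>D. discrete_subspace X D \<longrightarrow> |D| \<le>o s"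
    using sb unfolding spread_bound_def by auto
  have sK: "s \<le>o |K|" unfolding K_def
    by (rule ordIso_imp_ordLeq[OF ordIso_symmetric[OF card_of_Field_ordIso[OF sc(1)]]])
  have "natLeq \<le>o |K|" by (rule ordLeq_transitive[OF sc(2) sK])
  then have Kinf: "infinite K" using infinite_iff_natLeq_ordLeq by blast
  have spread: "|D| \<le>o |K|" if "D \<subseteq> topspace X" "subtopology X D = discrete_topology D" for D
  proof -
    have "discrete_subspace X D" using that unfolding discrete_subspace_def by blast
    then have "|D| \<le>o s" using sc(3) by blast
    then show ?thesis by (rule ordLeq_transitive[OF _ sK])
  qed
  have cexpK: "BNF_Cardinal_Arithmetic.cexp BNF_Cardinal_Arithmetic.ctwo s =o |Pow K|"
  proof -
    have "BNF_Cardinal_Arithmetic.cexp BNF_Cardinal_Arithmetic.ctwo s = |Func K (UNIV::bool set)|"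
      by (simp add: cexp_def ctwo_def Field_card_of K_def)
    then show ?thesis using ordIso_symmetric[OF card_of_Pow_Func[of K]] by simp
  qed
  have Nb: "|N x| \<le>o |Pow K|" if "x \<in> T" for x
  proof -
    have "(BNF_Cardinal_Arithmetic.csum BNF_Cardinal_Arithmetic.cone |N x|,
         BNF_Cardinal_Arithmetic.cexp BNF_Cardinal_Arithmetic.ctwo s) \<in> ordLeq"
      using assms(4) that unfolding nus_le_def N_def T_def by blast
    then have "|N x| \<le>o BNF_Cardinal_Arithmetic.cexp BNF_Cardinal_Arithmetic.ctwo s"
      by (rule ordLeq_transitive[OF ordLeq_csum2[OF card_of_Card_order]])
    then show ?thesis by (rule ordLeq_ordIso_trans[OF _ cexpK])
  qed
  have Nb': "\<And>x. x \<in> topspace X \<Longrightarrow> |theta_closure_of X {x}| \<le>o |Pow K|"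
    using Nb unfolding N_def T_def by blast
  have "\<forall>x\<in>T. \<exists>\<W>. (\<forall>W\<in>\<W>. openin X W \<and> x \<in> W) \<and> |\<W>| \<le>o |Pow K|
     \<and> (\<forall>p\<in>T. p \<notin> N x \<longrightarrow> (\<exists>W\<in>\<W>. p \<notin> W))"
  proof
    fix x assume "x \<in> T"
    then show "\<exists>\<W>. (\<forall>W\<in>\<W>. openin X W \<and> x \<in> W) \<and> |\<W>| \<le>o |Pow K|
     \<and> (\<forall>p\<in>T. p \<notin> N x \<longrightarrow> (\<exists>W\<in>\<W>. p \<notin> W))"
      using Wfam[OF Kinf _ spread, of x] unfolding T_def N_def by blast
  qed
  then obtain Wf where Wf: "\<And>x. x \<in> T \<Longrightarrow> (\<forall>W\<in>Wf x. openin X W \<and> x \<in> W) \<and> |Wf x| \<le>o |Pow K|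
     \<and> (\<forall>p\<in>T. p \<notin> N x \<longrightarrow> (\<exists>W\<in>Wf x. p \<notin> W))"
    by metis
  have muinf: "infinite (Pow (Pow K))" using Kinf by simp
  have KPK: "|K| \<le>o |Pow K|" by (rule ordLess_imp_ordLeq[OF card_of_Pow])
  have PKmu: "|Pow K| \<le>o |Pow (Pow K)|" by (rule ordLess_imp_ordLeq[OF card_of_Pow])
  have Kmu: "|K| \<le>o |Pow (Pow K)|" by (rule ordLeq_transitive[OF KPK PKmu])
  have muF: "\<not> finite (Field |Pow (Pow K)| )" using muinf by (simp add: Field_card_of)
  define wit where "wit = (\<lambda>E \<V>. SOME q. q \<in> T - (X closure_of E \<union> \<Union>\<V>))"
  define G where "G = (\<lambda>E. (X closure_of E \<union> (\<Union>e\<in>E. N e)) \<union> (\<lambda>\<V>. wit E \<V>) `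
     {\<V>. \<V> \<subseteq> (\<Union>e\<in>E. Wf e) \<and> |\<V>| \<le>o |K| \<and> T - (X closure_of E \<union> \<Union>\<V>) \<noteq> {}})"
  have witT: "wit E \<V> \<in> T - (X closure_of E \<union> \<Union>\<V>)" if "T - (X closure_of E \<union> \<Union>\<V>) \<noteq> {}" for E \<V>
    unfolding wit_def using that by (metis (no_types, lifting) ex_in_conv someI_ex)
  have Gp: "G E \<subseteq> T \<and> |G E| \<le>o |Pow (Pow K)|" if ET: "E \<subseteq> T" and EK: "|E| \<le>o |K|" for E
  proof
    have "X closure_of E \<subseteq> T" unfolding T_def by (rule closure_of_subset_topspace)
    moreover have "(\<Union>e\<in>E. N e) \<subseteq> T" unfolding N_def T_def by (intro UN_least N_sub)
    moreover have "(\<lambda>\<V>. wit E \<V>) ` {\<V>. \<V> \<subseteq> (\<Union>e\<in>E. Wf e) \<and> |\<V>| \<le>o |K| \<and> T - (X closure_of E \<union> \<Union>\<V>) \<noteq> {}} \<subseteq> T"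
      using witT by blast
    ultimately show "G E \<subseteq> T" unfolding G_def by blast
  next
    have EM: "|E| \<le>o |Pow (Pow K)|" by (rule ordLeq_transitive[OF EK Kmu])
    have c1: "|X closure_of E| \<le>o |Pow (Pow K)|"
      by (rule clbound[OF Kinf _ EK Nb']) (use ET T_def in blast)
    have c2: "|\<Union>e\<in>E. N e| \<le>o |Pow (Pow K)|"
      by (rule card_of_UNION_ordLeq_infinite[OF muinf EM])
         (use Nb ET PKmu ordLeq_transitive in blast)
    have S: "|\<Union>e\<in>E. Wf e| \<le>o |Pow (Pow K)|"
      by (rule card_of_UNION_ordLeq_infinite[OF muinf EM])
         (use Wf ET PKmu ordLeq_transitive in blast)
    have "{\<V>. \<V> \<subseteq> (\<Union>e\<in>E. Wf e) \<and> |\<V>| \<le>o |K| \<and> T - (X closure_of E \<union> \<Union>\<V>) \<noteq> {}}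
       \<subseteq> {\<V>. \<V> \<subseteq> (\<Union>e\<in>E. Wf e) \<and> |\<V>| \<le>o |K|}" by blast
    then have "|{\<V>. \<V> \<subseteq> (\<Union>e\<in>E. Wf e) \<and> |\<V>| \<le>o |K| \<and> T - (X closure_of E \<union> \<Union>\<V>) \<noteq> {}}| \<le>o |Pow (Pow K)|"
      by (rule ordLeq_transitive[OF card_of_mono1 small_subsets_bound[OF Kinf S]])
    then have c3: "|(\<lambda>\<V>. wit E \<V>) ` {\<V>. \<V> \<subseteq> (\<Union>e\<in>E. Wf e) \<and> |\<V>| \<le>o |K| \<and> T - (X closure_of E \<union> \<Union>\<V>) \<noteq> {}}| \<le>o |Pow (Pow K)|"
      by (rule ordLeq_transitive[OF card_of_image])
    have c12: "|X closure_of E \<union> (\<Union>e\<in>E. N e)| \<le>o |Pow (Pow K)|"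
      by (rule card_of_Un_ordLeq_infinite_Field[OF muF c1 c2 card_of_Card_order])
    show "|G E| \<le>o |Pow (Pow K)|" unfolding G_def
      by (rule card_of_Un_ordLeq_infinite_Field[OF muF c12 c3 card_of_Card_order])
  qed
  have "\<exists>A \<subseteq> T. |A| \<le>o |Pow (Pow K)| \<and> (\<forall>E. E \<subseteq> A \<and> |E| \<le>o |K| \<longrightarrow> G E \<subseteq> A)"
    by (rule closing_off[OF Kinf Gp])
  then obtain A where A0: "A \<subseteq> T" "|A| \<le>o |Pow (Pow K)|" "\<forall>E. E \<subseteq> A \<and> |E| \<le>o |K| \<longrightarrow> G E \<subseteq> A"
    by (elim exE conjE) (rule that)
  have A: "A \<subseteq> T" "|A| \<le>o |Pow (Pow K)|" "\<And>E. E \<subseteq> A \<Longrightarrow> |E| \<le>o |K| \<Longrightarrow> G E \<subseteq> A"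
    using A0 by simp_all
  have TA: "T \<subseteq> A"
  proof (rule ccontr)
    assume "\<not> T \<subseteq> A"
    then obtain p where p: "p \<in> T" "p \<notin> A" by blast
    have Kne: "K \<noteq> {}" using Kinf by auto
    have pN: "p \<notin> N a" if a: "a \<in> A" for a
    proof
      assume "p \<in> N a"
      moreover have "|{a}| \<le>o |K|" by (rule card_of_singl_ordLeq[OF Kne])
      then have "G {a} \<subseteq> A" using A(3)[of "{a}"] a by blast
      ultimately show False using p(2) unfolding G_def by blast
    qed
    have "\<forall>a\<in>A. \<exists>W. W \<in> Wf a \<and> p \<notin> W"
    proof
      fix a assume a: "a \<in> A"
      then have "a \<in> T" using A(1) by blast
      then show "\<exists>W. W \<in> Wf a \<and> p \<notin> W" using Wf[of a] pN[OF a] p(1) by blast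
    qed
    then obtain Wc where Wc: "\<And>a. a \<in> A \<Longrightarrow> Wc a \<in> Wf a \<and> p \<notin> Wc a" by metis
    have Wco: "openin X (Wc a) \<and> a \<in> Wc a" if "a \<in> A" for a
      using Wc[OF that] Wf[of a] that A(1) by blast
    have AT': "A \<subseteq> topspace X" using A(1) T_def by blast
    obtain D where D: "D \<subseteq> A" "subtopology X D = discrete_topology D"
      "A \<subseteq> X closure_of D \<union> (\<Union>d\<in>D. Wc d)"
      using sapirovskii[OF AT', of Wc] Wco by blast
    have DK: "|D| \<le>o |K|" by (rule spread[OF _ D(2)]) (use D(1) AT' in blast)
    define \<V> where "\<V> = Wc ` D"
    have VS: "\<V> \<subseteq> (\<Union>e\<in>D. Wf e)" unfolding \<V>_def using Wc D(1) by blast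
    have VK: "|\<V>| \<le>o |K|" unfolding \<V>_def by (rule ordLeq_transitive[OF card_of_image DK])
    have GD: "G D \<subseteq> A" by (rule A(3)[OF D(1) DK])
    have "p \<notin> X closure_of D" using GD p(2) unfolding G_def by blast
    moreover have "p \<notin> \<Union>\<V>" unfolding \<V>_def using Wc D(1) by blast
    ultimately have ne: "T - (X closure_of D \<union> \<Union>\<V>) \<noteq> {}" using p(1) by blast
    have "wit D \<V> \<in> G D" unfolding G_def using VS VK ne by blast
    then have "wit D \<V> \<in> A" using GD by blast
    moreover have "wit D \<V> \<in> T - (X closure_of D \<union> \<Union>\<V>)" by (rule witT[OF ne])
    ultimately show False using D(3) unfolding \<V>_def by blast
  qed
  have TM: "|topspace X| \<le>o |Pow (Pow K)|"
    by (rule ordLeq_transitive[OF card_of_mono1 A(2)]) (use TA T_def in blast)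
  have e1: "BNF_Cardinal_Arithmetic.cexp BNF_Cardinal_Arithmetic.ctwo (BNF_Cardinal_Arithmetic.cexp BNF_Cardinal_Arithmetic.ctwo s)
      = |Func (Func K (UNIV::bool set)) (UNIV::bool set)|"
    by (simp add: cexp_def ctwo_def Field_card_of K_def)
  have "|Pow K| \<le>o |Func K (UNIV::bool set)|" by (rule ordIso_imp_ordLeq[OF card_of_Pow_Func])
  then have "|Pow (Pow K)| \<le>o |Pow (Func K (UNIV::bool set))|" by (rule pow_mono_ord)
  then have "|Pow (Pow K)| \<le>o |Func (Func K (UNIV::bool set)) (UNIV::bool set)|"
    by (rule ordLeq_ordIso_trans[OF _ card_of_Pow_Func])
  then have "|topspace X| \<le>o |Func (Func K (UNIV::bool set)) (UNIV::bool set)|"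
    by (rule ordLeq_transitive[OF TM])
  then show ?thesis using e1 by simp
qed


end
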